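(* The matrix $\mathbb G(1)$ is a unitary operator on $\ell^2$ of the set of oriented edges of $\mathcal B$, i.e. on the space of $X=\sum_{\vec A}x_{\vec A}\delta_{\vec A}$ with norm $\|X\|^2=\sum_{\vec A}|x_{\vec A}|^2$.
   Context: $\mathcal B$ is the $2$-regular Bethe lattice: the infinite tree in which every node has exactly $3$ neighbours; each edge has two orientations, $-\vec A$ being the opposite of $\vec A$; write $\vec A\to\vec B$ when the terminal node of $\vec A$ equals the initial node of $\vec B$. $\mathbb G(1)$ is the matrix indexed by oriented edges with entries $\mathbb G(1)_{\vec B,\vec A}=-1/3$ if $\vec B=-\vec A$, $2/3$ if $\vec A\to\vec B$ and $\vec B\ne-\vec A$, and $0$ otherwise (it is the time-one propagator of Dirac masses for the wave equation with Kirchhoff conditions on $\mathcal B$). *)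

theory Defs
  imports "HOL-Analysis.Analysis"
begin

text \<open>Concrete model of the 2-regular Bethe lattice (infinite 3-regular tree):
  the Cayley graph of the free product of three copies of Z/2Z.\<close>

definition bethe_node :: "nat list \<Rightarrow> bool" where
  "bethe_node w \<longleftrightarrow> (\<forall>a\<in>set w. a < 3) \<and> successively (\<noteq>) w"

definition bethe_adj :: "nat list \<Rightarrow> nat list \<Rightarrow> bool" where
  "bethe_adj v w \<longleftrightarrow> bethe_node v \<and> bethe_node w \<and>
     (\<exists>a. w = v @ [a] \<or> v = w @ [a])"

type_synonym oedge = "nat list \<times> nat list"

definition oriented_edges :: "oedge set" where
  "oriented_edges = {(v, w). bethe_adj v w}"

definition opp :: "oedge \<Rightarrow> oedge" where
  "opp A = (snd A, fst A)"

definition feeds :: "oedge \<Rightarrow> oedge \<Rightarrow> bool" where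
  "feeds A B \<longleftrightarrow> snd A = fst B"

definition G1 :: "oedge \<Rightarrow> oedge \<Rightarrow> complex" where
  "G1 B A = (if B = opp A then - 1 / 3
             else if feeds A B \<and> B \<noteq> opp A then 2 / 3 else 0)"

definition l2_edges :: "(oedge \<Rightarrow> complex) set" where
  "l2_edges = {x. (\<forall>e. e \<notin> oriented_edges \<longrightarrow> x e = 0) \<and>
                  (\<lambda>e. (cmod (x e))\<^sup>2) summable_on oriented_edges}"

definition l2_norm_sq :: "(oedge \<Rightarrow> complex) \<Rightarrow> real" where
  "l2_norm_sq x = (\<Sum>\<^sub>\<infinity>e\<in>oriented_edges. (cmod (x e))\<^sup>2)"

definition G1_op :: "(oedge \<Rightarrow> complex) \<Rightarrow> (oedge \<Rightarrow> complex)" where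
  "G1_op x = (\<lambda>B. if B \<in> oriented_edges
                   then (\<Sum>\<^sub>\<infinity>A\<in>oriented_edges. G1 B A * x A) else 0)"

end

theory Submission
  imports Defs
begin

definition NB :: "nat list \<Rightarrow> nat list set" where "NB v = {w. bethe_adj v w}"

lemma adj_sym: "bethe_adj v w = bethe_adj w v"
  unfolding bethe_adj_def by blast

lemma node_snoc: "bethe_node (u @ [a]) \<longleftrightarrow> bethe_node u \<and> a < 3 \<and> (u = [] \<or> last u \<noteq> a)"
  unfolding bethe_node_def by (auto simp: successively_append_iff)

lemma node_snoc2: "bethe_node (u @ [a, b]) \<longleftrightarrow> bethe_node (u @ [a]) \<and> b < 3 \<and> b \<noteq> a"
  using node_snoc[of "u @ [a]" b] by auto

lemma NB_nil: "NB [] = {[0],[1],[2]}"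
  unfolding NB_def bethe_adj_def by (auto simp: node_snoc bethe_node_def)

lemma NB_snoc:
  assumes "bethe_node (u @ [a])"
  shows "NB (u @ [a]) = insert u {u @ [a, b] | b. b < 3 \<and> b \<noteq> a}"
  using assms unfolding NB_def bethe_adj_def
  by (auto simp: node_snoc2 node_snoc[of "u @ [a]"] node_snoc[of u] simp del: append_assoc) (auto simp: bethe_node_def)

lemma NB_fin_card:
  assumes "bethe_node v" shows "finite (NB v) \<and> card (NB v) = 3"
proof (cases v rule: rev_cases)
  case Nil then show ?thesis by (simp add: NB_nil)
next
  case (snoc u a)
  have a3: "a < 3" using assms snoc by (simp add: node_snoc)
  have e: "{u @ [a, b] | b. b < 3 \<and> b \<noteq> a} = (if a = 0 then {u@[a,1], u@[a,2]} else if a = 1 then {u@[a,0], u@[a,2]} else {u@[a,0],u@[a,1]})"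
    using a3 by (auto; presburger)
  show ?thesis using assms a3 unfolding snoc NB_snoc[OF assms[unfolded snoc]] e by auto
qed

lemma OE_Sigma: "oriented_edges = Sigma {v. bethe_node v} NB"
  unfolding oriented_edges_def NB_def bethe_adj_def by auto

lemma OE_mem: "(v, w) \<in> oriented_edges \<longleftrightarrow> bethe_adj v w"
  unfolding oriented_edges_def by simp

lemma opp_OE: "opp ` oriented_edges = oriented_edges"
  unfolding oriented_edges_def opp_def by (force simp: adj_sym image_iff)

lemma opp_mem: "opp e \<in> oriented_edges \<longleftrightarrow> e \<in> oriented_edges"
  unfolding oriented_edges_def opp_def by (cases e) (simp add: adj_sym)

lemma inj_opp: "inj opp"
  unfolding opp_def inj_def by auto

lemma reindex_opp:
  fixes h :: "oedge \<Rightarrow> 'b::{comm_monoid_add,t2_space}"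
  shows "(h \<circ> opp) summable_on oriented_edges \<longleftrightarrow> h summable_on oriented_edges"
    and "infsum (h \<circ> opp) oriented_edges = infsum h oriented_edges"
  using summable_on_reindex[of opp oriented_edges h] infsum_reindex[of opp oriented_edges h]
    inj_opp opp_OE by (metis inj_on_subset subset_UNIV)+

lemma transfer:
  fixes f g :: "oedge \<Rightarrow> real"
  assumes f0: "\<And>e. f e \<ge> 0" and g0: "\<And>e. g e \<ge> 0"
    and eq: "\<And>v. bethe_node v \<Longrightarrow> (\<Sum>w\<in>NB v. f (v, w)) = (\<Sum>w\<in>NB v. g (w, v))"
    and gs: "g summable_on oriented_edges"
  shows "f summable_on oriented_edges \<and> infsum f oriented_edges = infsum g oriented_edges"
proof -
  let ?N = "{v. bethe_node v}"
  have gs': "(g \<circ> opp) summable_on Sigma ?N NB" using gs reindex_opp(1) OE_Sigma by metis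
  have nf: "(\<lambda>x. norm (f x)) = f" using f0 by (auto simp: fun_eq_iff)
  have ng: "(\<lambda>x. norm ((g \<circ> opp) x)) = g \<circ> opp" using g0 by (auto simp: fun_eq_iff)
  have fin: "\<And>v. v \<in> ?N \<Longrightarrow> finite (NB v)" using NB_fin_card by blast
  have "(\<lambda>z. norm ((g \<circ> opp) z)) summable_on Sigma ?N NB" using gs' ng by simp
  then have A: "(\<lambda>z. norm ((\<lambda>v. infsum (\<lambda>w. norm ((g \<circ> opp) (v, w))) (NB v)) z)) summable_on ?N"
    using Infinite_Sum.abs_summable_on_Sigma_iff[where f="g \<circ> opp" and A="?N" and B=NB] by blast
  have B: "\<And>v. v \<in> ?N \<Longrightarrow> norm (infsum (\<lambda>w. norm ((g \<circ> opp) (v, w))) (NB v)) = norm (infsum (\<lambda>w. norm (f (v, w))) (NB v))"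
  proof -
    fix v assume v: "v \<in> ?N"
    have "infsum (\<lambda>w. norm ((g \<circ> opp) (v, w))) (NB v) = (\<Sum>w\<in>NB v. g (w, v))"
      using fin[OF v] g0 by (simp add: opp_def)
    moreover have "infsum (\<lambda>w. norm (f (v, w))) (NB v) = (\<Sum>w\<in>NB v. f (v, w))"
      using fin[OF v] f0 by simp
    ultimately show "?thesis v" using eq v by simp
  qed
  have C: "(\<lambda>z. norm ((\<lambda>v. infsum (\<lambda>w. norm (f (v, w))) (NB v)) z)) summable_on ?N"
    using summable_on_cong[of ?N "\<lambda>z. norm ((\<lambda>v. infsum (\<lambda>w. norm ((g \<circ> opp) (v, w))) (NB v)) z)"
       "\<lambda>z. norm ((\<lambda>v. infsum (\<lambda>w. norm (f (v, w))) (NB v)) z)"] A B by simp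
  have D: "\<forall>x\<in>?N. (\<lambda>y. norm (f (x, y))) summable_on NB x" using fin by simp
  have "(\<lambda>z. norm (f z)) summable_on Sigma ?N NB"
    using Infinite_Sum.abs_summable_on_Sigma_iff[where f=f and A="?N" and B=NB] C D by blast
  then have fs: "f summable_on oriented_edges" using nf OE_Sigma by simp
  have "infsum f oriented_edges = infsum (\<lambda>v. infsum (\<lambda>w. f (v, w)) (NB v)) ?N"
    using infsum_Sigma_banach[of f ?N NB] fs OE_Sigma by simp
  also have "\<dots> = infsum (\<lambda>v. infsum (\<lambda>w. (g \<circ> opp) (v, w)) (NB v)) ?N"
    using eq fin by (rule_tac infsum_cong) (simp add: opp_def)
  also have "\<dots> = infsum (g \<circ> opp) oriented_edges"
    using infsum_Sigma_banach[of "g \<circ> opp" ?N NB] gs' OE_Sigma by simp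
  also have "\<dots> = infsum g oriented_edges" using reindex_opp(2) by blast
  finally show ?thesis using fs by blast
qed


lemma G1_formula:
  assumes vw: "bethe_adj v w"
  shows "G1_op x (v, w) = 2/3 * (\<Sum>u\<in>NB v. x (u, v)) - x (w, v)"
proof -
  let ?S = "(\<lambda>u. (u, v)) ` NB v"
  have nv: "bethe_node v" using vw bethe_adj_def by blast
  have fin: "finite (NB v)" using NB_fin_card[OF nv] by blast
  have wN: "w \<in> NB v" using vw NB_def by simp
  have Ssub: "?S \<subseteq> oriented_edges" by (auto simp: NB_def OE_mem adj_sym)
  have "(\<Sum>\<^sub>\<infinity>A\<in>oriented_edges. G1 (v, w) A * x A) = (\<Sum>\<^sub>\<infinity>A\<in>?S. G1 (v, w) A * x A)"
  proof (rule infsum_cong_neutral)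
    fix A assume A: "A \<in> oriented_edges - ?S"
    obtain a b where ab: "A = (a, b)" by fastforce
    have "G1 (v, w) A = 0"
    proof (cases "b = v")
      case True
      then have "a \<in> NB v" using A ab by (auto simp: OE_mem NB_def adj_sym)
      then show ?thesis using A ab True by auto
    next
      case False
      then show ?thesis unfolding G1_def ab opp_def feeds_def by auto
    qed
    then show "G1 (v, w) A * x A = 0" by simp
  qed (use Ssub in auto)
  also have "\<dots> = (\<Sum>A\<in>?S. G1 (v, w) A * x A)" using fin by simp
  also have "\<dots> = (\<Sum>u\<in>NB v. G1 (v, w) (u, v) * x (u, v))"
    by (subst sum.reindex) (auto simp: inj_on_def)
  also have "\<dots> = (\<Sum>u\<in>NB v. 2/3 * x (u, v) - (if u = w then x (u, v) else 0))"
    by (rule sum.cong) (auto simp: G1_def opp_def feeds_def)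
  also have "\<dots> = 2/3 * (\<Sum>u\<in>NB v. x (u, v)) - x (w, v)"
    using fin wN by (simp add: sum_subtractf sum_distrib_left)
  finally show ?thesis unfolding G1_op_def using vw OE_mem by simp
qed

lemma exp_aux:
  fixes S y :: complex
  shows "(2/3*S - y) * cnj (2/3*S - y) = 4/9*(S*cnj S) - 2/3*S*cnj y - 2/3*cnj S*y + y*cnj y"
  by (simp add: algebra_simps)

lemma vertex_identity:
  fixes x :: "nat list \<Rightarrow> complex"
  assumes "finite N" "card N = 3"
  shows "(\<Sum>w\<in>N. (cmod (2/3 * (\<Sum>u\<in>N. x u) - x w))\<^sup>2) = (\<Sum>w\<in>N. (cmod (x w))\<^sup>2)"
proof -
  let ?S = "\<Sum>u\<in>N. x u"
  have "complex_of_real (\<Sum>w\<in>N. (cmod (2/3 * ?S - x w))\<^sup>2)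
      = (\<Sum>w\<in>N. (2/3 * ?S - x w) * cnj (2/3 * ?S - x w))"
    by (simp only: of_real_sum complex_norm_square)
  also have "\<dots> = (\<Sum>w\<in>N. 4/9 * (?S * cnj ?S) - 2/3 * ?S * cnj (x w) - 2/3 * cnj ?S * x w + x w * cnj (x w))"
    by (rule sum.cong) (simp_all only: exp_aux)
  also have "\<dots> = of_nat (card N) * (4/9 * (?S * cnj ?S)) - 2/3 * ?S * cnj ?S - 2/3 * cnj ?S * ?S + (\<Sum>w\<in>N. x w * cnj (x w))"
  proof -
    have e1: "(\<Sum>w\<in>N. 2/3*?S*cnj (x w)) = 2/3*?S*cnj ?S" by (simp add: sum_distrib_left)
    have e2: "(\<Sum>w\<in>N. 2/3*cnj ?S*x w) = 2/3*cnj ?S*?S" by (simp only: sum_distrib_left[symmetric])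
    have e3: "(\<Sum>w\<in>N. 4/9 * (?S * cnj ?S)) = of_nat (card N) * (4/9 * (?S * cnj ?S))" by simp
    show ?thesis by (simp only: sum.distrib sum_subtractf e1 e2 e3)
  qed
  also have "\<dots> = (\<Sum>w\<in>N. x w * cnj (x w))" using assms(2) by (simp add: algebra_simps del: cnj_sum)
  also have "\<dots> = complex_of_real (\<Sum>w\<in>N. (cmod (x w))\<^sup>2)"
    by (simp only: of_real_sum complex_norm_square)
  finally show ?thesis using of_real_eq_iff by blast
qed


lemma part1:
  assumes x: "x \<in> l2_edges"
  shows "G1_op x \<in> l2_edges \<and> l2_norm_sq (G1_op x) = l2_norm_sq x"
proof -
  have eq: "(\<Sum>w\<in>NB v. (cmod (G1_op x (v, w)))\<^sup>2) = (\<Sum>w\<in>NB v. (cmod (x (w, v)))\<^sup>2)"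
    if v: "bethe_node v" for v
  proof -
    have "(\<Sum>w\<in>NB v. (cmod (G1_op x (v, w)))\<^sup>2)
        = (\<Sum>w\<in>NB v. (cmod (2/3 * (\<Sum>u\<in>NB v. x (u, v)) - x (w, v)))\<^sup>2)"
      by (rule sum.cong) (auto simp: G1_formula NB_def)
    also have "\<dots> = (\<Sum>w\<in>NB v. (cmod (x (w, v)))\<^sup>2)"
      using vertex_identity[of "NB v" "\<lambda>u. x (u, v)"] NB_fin_card[OF v] by simp
    finally show ?thesis .
  qed
  have gs: "(\<lambda>e. (cmod (x e))\<^sup>2) summable_on oriented_edges" using x l2_edges_def by blast
  from transfer[of "\<lambda>e. (cmod (G1_op x e))\<^sup>2" "\<lambda>e. (cmod (x e))\<^sup>2", OF _ _ _ gs] eq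
  have "(\<lambda>e. (cmod (G1_op x e))\<^sup>2) summable_on oriented_edges \<and>
     infsum (\<lambda>e. (cmod (G1_op x e))\<^sup>2) oriented_edges = infsum (\<lambda>e. (cmod (x e))\<^sup>2) oriented_edges"
    by simp
  then show ?thesis unfolding l2_edges_def l2_norm_sq_def by (auto simp: G1_op_def)
qed

lemma part2:
  assumes y: "y \<in> l2_edges"
  shows "\<exists>x\<in>l2_edges. G1_op x = y"
proof -
  have opp_l2: "z \<circ> opp \<in> l2_edges" if z: "z \<in> l2_edges" for z
  proof -
    have "(\<lambda>e. (cmod (z e))\<^sup>2) summable_on oriented_edges" using z l2_edges_def by blast
    then have "((\<lambda>e. (cmod (z e))\<^sup>2) \<circ> opp) summable_on oriented_edges" using reindex_opp(1) by blast
    moreover have "\<forall>e. e \<notin> oriented_edges \<longrightarrow> (z \<circ> opp) e = 0"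
    proof (intro allI impI)
      fix e assume "e \<notin> oriented_edges"
      then have "opp e \<notin> oriented_edges" using opp_mem by blast
      moreover have "\<forall>e. e \<notin> oriented_edges \<longrightarrow> z e = 0" using z unfolding l2_edges_def by blast
      ultimately have "z (opp e) = 0" by blast
      then show "(z \<circ> opp) e = 0" by simp
    qed
    ultimately show ?thesis unfolding l2_edges_def by (simp add: o_def)
  qed
  define y' where "y' = y \<circ> opp"
  define x where "x = G1_op y' \<circ> opp"
  have "x \<in> l2_edges" unfolding x_def y'_def using opp_l2 part1 y by blast
  moreover have "G1_op x = y"
  proof
    fix B
    show "G1_op x B = y B"
    proof (cases "B \<in> oriented_edges")
      case False
      moreover have "\<forall>e. e \<notin> oriented_edges \<longrightarrow> y e = 0" using y unfolding l2_edges_def by blast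
      ultimately have "y B = 0" by blast
      then show ?thesis using False by (simp add: G1_op_def)
    next
      case True
      obtain v w where B: "B = (v, w)" by fastforce
      have vw: "bethe_adj v w" using True B OE_mem by simp
      have nv: "bethe_node v" using vw bethe_adj_def by blast
      have fin: "finite (NB v)" and c3: "card (NB v) = 3" using NB_fin_card[OF nv] by auto
      let ?T = "\<Sum>t\<in>NB v. y (v, t)"
      have xu: "x (u, v) = 2/3 * ?T - y (v, u)" if "u \<in> NB v" for u
      proof -
        have "x (u, v) = G1_op y' (v, u)" by (simp add: x_def opp_def)
        also have "\<dots> = 2/3 * (\<Sum>t\<in>NB v. y' (t, v)) - y' (u, v)"
          using that by (simp add: G1_formula NB_def)
        finally show ?thesis by (simp add: y'_def opp_def)
      qed
      have "(\<Sum>u\<in>NB v. x (u, v)) = (\<Sum>u\<in>NB v. 2/3 * ?T - y (v, u))"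
        using xu by (rule sum.cong[OF refl])
      also have "\<dots> = ?T" using c3 by (simp add: sum_subtractf)
      finally have S: "(\<Sum>u\<in>NB v. x (u, v)) = ?T" .
      have wN: "w \<in> NB v" using vw NB_def by simp
      show ?thesis unfolding B G1_formula[OF vw] S xu[OF wN] by simp
    qed
  qed
  ultimately show ?thesis by blast
qed

theorem lemma1:
  shows "(\<forall>x\<in>l2_edges. G1_op x \<in> l2_edges \<and> l2_norm_sq (G1_op x) = l2_norm_sq x) \<and>
         (\<forall>y\<in>l2_edges. \<exists>x\<in>l2_edges. G1_op x = y)"
  using part1 part2 by blast

end
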